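(* Let $f$ be an axis rule defined for profiles over every finite candidate set, satisfying resistance to cloning, and suppose there are constants $h^*_m,h_m>0$ ($m\ge3$) such that for every finite $C$ with $|C|=m$, $f$ restricted to profiles over $C$ is the scoring rule with $\mathrm{cost}(A,\triangleleft)=0$ if $A$ is an interval of $\triangleleft$, $\mathrm{cost}(A,\triangleleft)=h^*_m$ if $A$ is not an interval of $\triangleleft$ and contains both the leftmost and rightmost candidate of $\triangleleft$, and $\mathrm{cost}(A,\triangleleft)=h_m$ otherwise. Then $h^*_m\le h_m$ for all $m\ge4$.
   Context: Candidates come from a fixed infinite universe. An approval ballot is a nonempty subset $A\subseteq C$; a profile over $C$ is a finite sequence of ballots. An axis is a strict linear order $\triangleleft$ on $C$. A ballot $A$ is an interval of $\triangleleft$ if for all $a,b\in A$ and every $c$ with $a\triangleleft c\triangleleft b$ we have $c\in A$. The scoring rule with cost $\mathrm{cost}$ returns $\arg\min_{\triangleleft}\sum_{A\in P}\mathrm{cost}(A,\triangleleft)$. Two candidates $a,a'$ are clones in $P$ if for every $A\in P$, $a\in A$ iff $a'\in A$. $P_{-c}$ is the profile over $C\setminus\{c\}$ obtained by removing $c$ from every ballot (ballots becoming empty are discarded); $\triangleleft_{-c}$ is the restriction of $\triangleleft$ to $C\setminus\{c\}$. Resistance to cloning: for every profile $P$ with clones $a,a'$, (1) for every $\triangleleft\in f(P)$, $\triangleleft_{-a}\in f(P_{-a})$, and (2) for every $\triangleleft^*\in f(P_{-a})$ there is $\triangleleft\in f(P)$ with $\triangleleft_{-a}=\triangleleft^*$.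 *)

theory Defs
  imports Complex_Main
begin

text \<open>An axis over a finite candidate set C is a strict linear order on C, represented as the
  list of the candidates of C from left to right (distinct, with set equal to C).\<close>

definition profile_over :: "'a set \<Rightarrow> 'a set list \<Rightarrow> bool" where
  "profile_over C P \<longleftrightarrow> (\<forall>A \<in> set P. A \<noteq> {} \<and> A \<subseteq> C)"

definition axes :: "'a set \<Rightarrow> 'a list set" where
  "axes C = {xs. distinct xs \<and> set xs = C}"

definition axis_less :: "'a list \<Rightarrow> 'a \<Rightarrow> 'a \<Rightarrow> bool" where
  "axis_less xs a b \<longleftrightarrow> (\<exists>i j. i < j \<and> j < length xs \<and> xs ! i = a \<and> xs ! j = b)"

definition is_interval :: "'a set \<Rightarrow> 'a list \<Rightarrow> bool" where
  "is_interval A xs \<longleftrightarrow>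
     (\<forall>a \<in> A. \<forall>b \<in> A. \<forall>c. axis_less xs a c \<and> axis_less xs c b \<longrightarrow> c \<in> A)"

definition scoring_rule ::
  "('a set \<Rightarrow> 'a list \<Rightarrow> real) \<Rightarrow> 'a set \<Rightarrow> 'a set list \<Rightarrow> 'a list set" where
  "scoring_rule cost C P =
     {xs \<in> axes C. \<forall>ys \<in> axes C. (\<Sum>A\<leftarrow>P. cost A xs) \<le> (\<Sum>A\<leftarrow>P. cost A ys)}"

definition interval_cost :: "real \<Rightarrow> real \<Rightarrow> 'a set \<Rightarrow> 'a list \<Rightarrow> real" where
  "interval_cost hstar h A xs =
     (if is_interval A xs then 0
      else if hd xs \<in> A \<and> last xs \<in> A then hstar else h)"

definition clones :: "'a set list \<Rightarrow> 'a \<Rightarrow> 'a \<Rightarrow> bool" where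
  "clones P a a' \<longleftrightarrow> (\<forall>A \<in> set P. a \<in> A \<longleftrightarrow> a' \<in> A)"

definition remove_cand :: "'a \<Rightarrow> 'a set list \<Rightarrow> 'a set list" where
  "remove_cand c P = filter (\<lambda>A. A \<noteq> {}) (map (\<lambda>A. A - {c}) P)"

definition restrict_axis :: "'a \<Rightarrow> 'a list \<Rightarrow> 'a list" where
  "restrict_axis c xs = removeAll c xs"

definition resistant_to_cloning :: "('a set \<Rightarrow> 'a set list \<Rightarrow> 'a list set) \<Rightarrow> bool" where
  "resistant_to_cloning f \<longleftrightarrow>
     (\<forall>C P a a'. finite C \<and> profile_over C P \<and> a \<in> C \<and> a' \<in> C \<and> a \<noteq> a' \<and> clones P a a' \<longrightarrow>
        (\<forall>xs \<in> f C P. restrict_axis a xs \<in> f (C - {a}) (remove_cand a P)) \<and>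
        (\<forall>ys \<in> f (C - {a}) (remove_cand a P). \<exists>xs \<in> f C P. restrict_axis a xs = ys))"

end

theory Submission
  imports Defs
begin

lemma idx_range:
  assumes "xs = us @ vs @ ws" "distinct xs" "k < length xs" "xs ! k \<in> set vs"
  shows "length us \<le> k \<and> k < length us + length vs"
proof -
  obtain p where p: "p < length vs" "vs ! p = xs ! k" using assms(4) by (metis in_set_conv_nth)
  have "xs ! (length us + p) = vs ! p" using assms(1) p(1) by (simp add: nth_append)
  moreover have "length us + p < length xs" using assms(1) p(1) by simp
  ultimately have "length us + p = k" using assms(2,3) p(2) nth_eq_iff_index_eq by metis
  thus ?thesis using p by simp
qed

lemma interval_seg:
  assumes "xs = us @ vs @ ws" "distinct xs" "A = set vs"
  shows "is_interval A xs"
  unfolding is_interval_def axis_less_def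
proof (intro ballI allI impI)
  fix x y c
  assume x: "x \<in> A" and y: "y \<in> A" and
    h: "(\<exists>i j. i < j \<and> j < length xs \<and> xs ! i = x \<and> xs ! j = c) \<and>
        (\<exists>i j. i < j \<and> j < length xs \<and> xs ! i = c \<and> xs ! j = y)"
  then obtain i j i' j' where ij: "i < j" "j < length xs" "xs ! i = x" "xs ! j = c"
    and ij': "i' < j'" "j' < length xs" "xs ! i' = c" "xs ! j' = y" by blast
  have "j = i'" using ij ij' assms(2) nth_eq_iff_index_eq by (metis order.strict_trans)
  have r1: "length us \<le> i" using idx_range[OF assms(1,2)] ij x assms(3) by auto
  have r2: "j' < length us + length vs" using idx_range[OF assms(1,2)] ij' y assms(3) by auto
  have lt: "j - length us < length vs" using r1 r2 ij ij' \<open>j = i'\<close> by linarith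
  have ge: "length us \<le> j" using r1 ij by linarith
  have "xs ! j = (vs @ ws) ! (j - length us)" using assms(1) ge by (simp add: nth_append)
  also have "\<dots> = vs ! (j - length us)" using lt by (simp add: nth_append)
  finally have "xs ! j = vs ! (j - length us)" .
  moreover note lt
  ultimately show "c \<in> A" using ij assms(3) by simp
qed

lemma not_interval:
  assumes "i < j" "j < k" "k < length xs" "xs ! i \<in> A" "xs ! k \<in> A" "xs ! j \<notin> A"
  shows "\<not> is_interval A xs"
proof
  assume iv: "is_interval A xs"
  have "axis_less xs (xs!i) (xs!j)" unfolding axis_less_def using assms(1-3) by force
  moreover have "axis_less xs (xs!j) (xs!k)" unfolding axis_less_def using assms(1-3) by force
  ultimately show False using iv assms(4-6) unfolding is_interval_def by blast
qed

lemma al_nth: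
  assumes "distinct ys" "i < length ys" "j < length ys" "i < j"
  shows "axis_less ys (ys!i) (ys!j)"
  unfolding axis_less_def using assms by blast

lemma iv_use: "is_interval A ys \<Longrightarrow> x \<in> A \<Longrightarrow> y \<in> A \<Longrightarrow> axis_less ys x c \<Longrightarrow> axis_less ys c y \<Longrightarrow> c \<in> A"
  unfolding is_interval_def by blast

lemma triangle:
  assumes "distinct ys" "c0 \<in> set ys" "c1 \<in> set ys" "c2 \<in> set ys"
    "c0 \<noteq> c1" "c0 \<noteq> c2" "c1 \<noteq> c2" "c0 \<notin> B" "c1 \<in> B" "c2 \<in> B"
    "is_interval {c0,c1} ys" "is_interval {c0,c2} ys"
  shows "\<not> is_interval B ys"
proof -
  obtain i0 where i0: "i0 < length ys" "ys!i0 = c0" using assms(2) by (metis in_set_conv_nth)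
  obtain i1 where i1: "i1 < length ys" "ys!i1 = c1" using assms(3) by (metis in_set_conv_nth)
  obtain i2 where i2: "i2 < length ys" "ys!i2 = c2" using assms(4) by (metis in_set_conv_nth)
  have ne: "i0 \<noteq> i1" "i0 \<noteq> i2" "i1 \<noteq> i2" using i0 i1 i2 assms(5-7) by auto
  have A: "\<And>p q. p < length ys \<Longrightarrow> q < length ys \<Longrightarrow> p < q \<Longrightarrow> axis_less ys (ys!p) (ys!q)"
    using al_nth assms(1) by blast
  have A01: "i0 < i1 \<Longrightarrow> axis_less ys c0 c1" using A i0 i1 by metis
  have A10: "i1 < i0 \<Longrightarrow> axis_less ys c1 c0" using A i0 i1 by metis
  have A02: "i0 < i2 \<Longrightarrow> axis_less ys c0 c2" using A i0 i2 by metis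
  have A20: "i2 < i0 \<Longrightarrow> axis_less ys c2 c0" using A i0 i2 by metis
  have A12: "i1 < i2 \<Longrightarrow> axis_less ys c1 c2" using A i1 i2 by metis
  have A21: "i2 < i1 \<Longrightarrow> axis_less ys c2 c1" using A i1 i2 by metis
  have n1: "\<not> (axis_less ys c0 c1 \<and> axis_less ys c1 c2)"
    using iv_use[OF assms(12), of c0 c2 c1] assms(5,7) by auto
  have n1': "\<not> (axis_less ys c2 c1 \<and> axis_less ys c1 c0)"
    using iv_use[OF assms(12), of c2 c0 c1] assms(5,7) by auto
  have n2: "\<not> (axis_less ys c0 c2 \<and> axis_less ys c2 c1)"
    using iv_use[OF assms(11), of c0 c1 c2] assms(6,7) by auto
  have n2': "\<not> (axis_less ys c1 c2 \<and> axis_less ys c2 c0)"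
    using iv_use[OF assms(11), of c1 c0 c2] assms(6,7) by auto
  have "(i1 < i0 \<and> i0 < i2) \<or> (i2 < i0 \<and> i0 < i1)"
    using ne A01 A10 A02 A20 A12 A21 n1 n1' n2 n2' by (meson linorder_neqE_nat)
  then show ?thesis
  proof
    assume "i1 < i0 \<and> i0 < i2"
    then show ?thesis using not_interval[of i1 i0 i2 ys B] i0 i1 i2 assms(8-10) by auto
  next
    assume "i2 < i0 \<and> i0 < i1"
    then show ?thesis using not_interval[of i2 i0 i1 ys B] i0 i1 i2 assms(8-10) by auto
  qed
qed


lemma cost_ge: "\<not> is_interval A xs \<Longrightarrow> min hs hh \<le> interval_cost hs hh A xs"
  by (simp add: interval_cost_def)

lemma cost_nn: "0 < hs \<Longrightarrow> 0 < hh \<Longrightarrow> 0 \<le> interval_cost hs hh A xs"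
  by (simp add: interval_cost_def)

theorem mainTheorem16:
  fixes f :: "'a set \<Rightarrow> 'a set list \<Rightarrow> 'a list set"
    and hstar h :: "nat \<Rightarrow> real"
  assumes "infinite (UNIV :: 'a set)"
    and "resistant_to_cloning f"
    and "\<forall>m \<ge> 3. hstar m > 0 \<and> h m > 0"
    and "\<forall>C P. finite C \<and> card C \<ge> 3 \<and> profile_over C P \<longrightarrow>
           f C P = scoring_rule (interval_cost (hstar (card C)) (h (card C))) C P"
  shows "\<forall>m \<ge> 4. hstar m \<le> h m"
proof (intro allI impI)
  fix m :: nat assume m4: "4 \<le> m"
  show "hstar m \<le> h m"
  proof (rule ccontr)
    assume "\<not> hstar m \<le> h m"
    hence gt: "h m < hstar m" by simp
    obtain S :: "'a set" where S: "finite S" "card S = Suc m"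
      using infinite_arbitrarily_large[OF assms(1)] by blast
    obtain L where L: "distinct L" "set L = S" using finite_distinct_list[OF S(1)] by blast
    have lenL: "length L = Suc m" using L S distinct_card by metis
    obtain c0 L1 where L1: "L = c0 # L1" using lenL by (cases L) auto
    obtain c1 L2 where L2: "L1 = c1 # L2" using lenL L1 m4 by (cases L1) auto
    obtain c2 L3 where L3: "L2 = c2 # L3" using lenL L1 L2 m4 by (cases L2) auto
    obtain a L4 where L4: "L3 = a # L4" using lenL L1 L2 L3 m4 by (cases L3) auto
    obtain d R where L5: "L4 = d # R" using lenL L1 L2 L3 L4 m4 by (cases L4) auto
    define D where "D = d # R"
    have Ld: "L = c0 # c1 # c2 # a # D" using L1 L2 L3 L4 L5 D_def by simp
    have lenD: "length D = m - 3" using lenL Ld by simp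
    have dist: "distinct (c0 # c1 # c2 # a # D)" using L(1) Ld by simp
    have Dne: "D \<noteq> []" using D_def by simp
    have lastD: "last D \<in> set D" using Dne by simp
    define C where "C = set L"
    define B3 where "B3 = insert c1 (insert c2 (insert a (set D)))"
    define B3' where "B3' = insert c1 (insert c2 (set D))"
    define P where "P = [{c0,c1},{c0,c2},B3]"
    define P' where "P' = [{c0,c1},{c0,c2},B3']"
    have dn: "c0 \<noteq> c1" "c0 \<noteq> c2" "c0 \<noteq> a" "c1 \<noteq> c2" "c1 \<noteq> a" "c2 \<noteq> a"
      "c0 \<notin> set D" "c1 \<notin> set D" "c2 \<notin> set D" "a \<notin> set D" "distinct D"
      using dist by auto
    have dD: "d \<in> set D" using D_def by simp
    have rc: "remove_cand a P = P'"
      unfolding remove_cand_def P_def P'_def B3_def B3'_def using dn by auto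
    have finC: "finite C" unfolding C_def by simp
    have cardC: "card C = Suc m" unfolding C_def using L S by simp
    have cardC': "card (C - {a}) = m" using cardC finC by (simp add: C_def Ld)
    have aC: "a \<in> C" "d \<in> C" "a \<noteq> d" unfolding C_def using Ld dD dn by auto
    have prof: "profile_over C P" unfolding profile_over_def P_def B3_def C_def Ld by auto
    have prof': "profile_over (C - {a}) P'"
      unfolding profile_over_def P'_def B3'_def C_def Ld using dn by auto
    have cl: "clones P a d" unfolding clones_def P_def B3_def using dn dD by auto
    have R1: "\<forall>xs \<in> f C P. restrict_axis a xs \<in> f (C - {a}) P'"
      using assms(2) unfolding resistant_to_cloning_def rc[symmetric]
      using finC prof aC cl by blast
    have fC: "f C P = scoring_rule (interval_cost (hstar (Suc m)) (h (Suc m))) C P"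
      using assms(4) finC prof cardC m4 by simp
    have fC': "f (C - {a}) P' = scoring_rule (interval_cost (hstar m) (h m)) (C - {a}) P'"
      using assms(4) finC prof' cardC' m4 by simp
    define hs where "hs = hstar (Suc m)"
    define hh where "hh = h (Suc m)"
    have pos: "0 < hs" "0 < hh" "0 < hstar m" "0 < h m" using assms(3) m4 hs_def hh_def by auto
    let ?K = "interval_cost hs hh"
    let ?K' = "interval_cost (hstar m) (h m)"
    have sumP: "\<And>xs. (\<Sum>A\<leftarrow>P. ?K A xs) = ?K {c0,c1} xs + ?K {c0,c2} xs + ?K B3 xs"
      unfolding P_def by simp
    have sumP': "\<And>xs. (\<Sum>A\<leftarrow>P'. ?K' A xs) = ?K' {c0,c1} xs + ?K' {c0,c2} xs + ?K' B3' xs"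
      unfolding P'_def by simp
    have lower: "\<forall>ys \<in> axes C. min hs hh \<le> (\<Sum>A\<leftarrow>P. ?K A ys)"
    proof
      fix ys assume ys: "ys \<in> axes C"
      have ysd: "distinct ys" "set ys = C" using ys unfolding axes_def by auto
      have n0: "0 \<le> ?K A ys" for A using cost_nn pos by blast
      show "min hs hh \<le> (\<Sum>A\<leftarrow>P. ?K A ys)"
      proof (cases "is_interval {c0,c1} ys \<and> is_interval {c0,c2} ys")
        case True
        have "\<not> is_interval B3 ys"
          using triangle[of ys c0 c1 c2 B3] True ysd dn unfolding C_def B3_def Ld by auto
        then show ?thesis using cost_ge[of B3 ys hs hh] n0[of "{c0,c1}"] n0[of "{c0,c2}"] sumP[of ys] by linarith
      next
        case False
        then show ?thesis using cost_ge[of "{c0,c1}" ys hs hh] cost_ge[of "{c0,c2}" ys hs hh]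
          n0[of "{c0,c1}"] n0[of "{c0,c2}"] n0[of B3] sumP[of ys] by linarith
      qed
    qed
    define zs where "zs = c0 # c2 # c1 # D"
    have zsA: "zs \<in> axes (C - {a})" unfolding axes_def zs_def C_def Ld using dn by auto
    have zsd: "distinct zs" using zsA unfolding axes_def by simp
    have "\<not> is_interval {c0,c1} zs"
      by (rule not_interval[of 0 1 2]) (use dn in \<open>auto simp: zs_def\<close>)
    moreover have "last zs \<notin> {c0,c1}" using lastD dn Dne by (auto simp: zs_def)
    moreover have "is_interval {c0,c2} zs"
      by (rule interval_seg[of zs "[]" "[c0,c2]" "c1#D"]) (use zsd in \<open>auto simp: zs_def\<close>)
    moreover have "is_interval B3' zs"
      by (rule interval_seg[of zs "[c0]" "c2#c1#D" "[]"]) (use zsd in \<open>auto simp: zs_def B3'_def\<close>)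
    ultimately have czs: "(\<Sum>A\<leftarrow>P'. ?K' A zs) = h m"
      unfolding sumP' by (simp add: interval_cost_def)
    show False
    proof (cases "hh \<le> hs")
      case True
      define xs where "xs = c0 # c2 # D @ [c1, a]"
      have xsA: "xs \<in> axes C" unfolding axes_def xs_def C_def Ld using dn by auto
      have xsd: "distinct xs" using xsA unfolding axes_def by simp
      have "\<not> is_interval {c0,c1} xs"
        by (rule not_interval[of 0 1 "Suc (Suc (length D))"]) (use dn in \<open>auto simp: xs_def nth_append\<close>)
      moreover have "last xs \<notin> {c0,c1}" using dn by (auto simp: xs_def)
      moreover have "is_interval {c0,c2} xs"
        by (rule interval_seg[of xs "[]" "[c0,c2]" "D @ [c1,a]"]) (use xsd in \<open>auto simp: xs_def\<close>)
      moreover have "is_interval B3 xs"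
        by (rule interval_seg[of xs "[c0]" "c2# D @ [c1,a]" "[]"]) (use xsd in \<open>auto simp: xs_def B3_def\<close>)
      ultimately have cxs: "(\<Sum>A\<leftarrow>P. ?K A xs) = hh"
        unfolding sumP by (simp add: interval_cost_def)
      have "xs \<in> f C P" unfolding fC scoring_rule_def hs_def[symmetric] hh_def[symmetric]
        using xsA lower cxs True by (simp add: min_absorb2)
      hence "restrict_axis a xs \<in> f (C - {a}) P'" using R1 by blast
      moreover have rs: "restrict_axis a xs = c0 # c2 # D @ [c1]"
        unfolding restrict_axis_def xs_def using dn by simp
      ultimately have rsf: "c0 # c2 # D @ [c1] \<in> f (C - {a}) P'" by simp
      define rs where "rs = c0 # c2 # D @ [c1]"
      have rsA: "rs \<in> axes (C - {a})" using rsf unfolding fC' scoring_rule_def rs_def by simp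
      have rsd: "distinct rs" using rsA unfolding axes_def by simp
      have "\<not> is_interval {c0,c1} rs"
        by (rule not_interval[of 0 1 "Suc (Suc (length D))"]) (use dn in \<open>auto simp: rs_def nth_append\<close>)
      moreover have "hd rs = c0" "last rs = c1" by (auto simp: rs_def)
      moreover have "is_interval {c0,c2} rs"
        by (rule interval_seg[of rs "[]" "[c0,c2]" "D @ [c1]"]) (use rsd in \<open>auto simp: rs_def\<close>)
      moreover have "is_interval B3' rs"
        by (rule interval_seg[of rs "[c0]" "c2# D @ [c1]" "[]"]) (use rsd in \<open>auto simp: rs_def B3'_def\<close>)
      ultimately have crs: "(\<Sum>A\<leftarrow>P'. ?K' A rs) = hstar m"
        unfolding sumP' by (simp add: interval_cost_def)
      have "(\<Sum>A\<leftarrow>P'. ?K' A rs) \<le> (\<Sum>A\<leftarrow>P'. ?K' A zs)"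
        using rsf zsA unfolding fC' scoring_rule_def rs_def by blast
      then show False using crs czs gt by simp
    next
      case False
      define xs where "xs = c1 # c0 # c2 # a # D"
      have xsA: "xs \<in> axes C" unfolding axes_def xs_def C_def Ld using dn by auto
      have xsd: "distinct xs" using xsA unfolding axes_def by simp
      have "\<not> is_interval B3 xs"
        by (rule not_interval[of 0 1 2]) (use dn in \<open>auto simp: xs_def B3_def\<close>)
      moreover have "hd xs \<in> B3" "last xs \<in> B3" using lastD Dne by (auto simp: xs_def B3_def)
      moreover have "is_interval {c0,c1} xs"
        by (rule interval_seg[of xs "[]" "[c1,c0]" "c2 # a # D"]) (use xsd in \<open>auto simp: xs_def\<close>)
      moreover have "is_interval {c0,c2} xs"
        by (rule interval_seg[of xs "[c1]" "[c0,c2]" "a # D"]) (use xsd in \<open>auto simp: xs_def\<close>)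
      ultimately have cxs: "(\<Sum>A\<leftarrow>P. ?K A xs) = hs"
        unfolding sumP by (simp add: interval_cost_def)
      have "xs \<in> f C P" unfolding fC scoring_rule_def hs_def[symmetric] hh_def[symmetric]
        using xsA lower cxs False by (simp add: min_absorb1)
      hence "restrict_axis a xs \<in> f (C - {a}) P'" using R1 by blast
      moreover have rs: "restrict_axis a xs = c1 # c0 # c2 # D"
        unfolding restrict_axis_def xs_def using dn by simp
      ultimately have rsf: "c1 # c0 # c2 # D \<in> f (C - {a}) P'" by simp
      define rs where "rs = c1 # c0 # c2 # D"
      have rsA: "rs \<in> axes (C - {a})" using rsf unfolding fC' scoring_rule_def rs_def by simp
      have rsd: "distinct rs" using rsA unfolding axes_def by simp
      have "\<not> is_interval B3' rs"
        by (rule not_interval[of 0 1 2]) (use dn in \<open>auto simp: rs_def B3'_def\<close>)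
      moreover have "hd rs \<in> B3'" "last rs \<in> B3'" using lastD Dne by (auto simp: rs_def B3'_def)
      moreover have "is_interval {c0,c1} rs"
        by (rule interval_seg[of rs "[]" "[c1,c0]" "c2 # D"]) (use rsd in \<open>auto simp: rs_def\<close>)
      moreover have "is_interval {c0,c2} rs"
        by (rule interval_seg[of rs "[c1]" "[c0,c2]" "D"]) (use rsd in \<open>auto simp: rs_def\<close>)
      ultimately have crs: "(\<Sum>A\<leftarrow>P'. ?K' A rs) = hstar m"
        unfolding sumP' by (simp add: interval_cost_def)
      have "(\<Sum>A\<leftarrow>P'. ?K' A rs) \<le> (\<Sum>A\<leftarrow>P'. ?K' A zs)"
        using rsf zsA unfolding fC' scoring_rule_def rs_def by blast
      then show False using crs czs gt by simp
    qed
  qed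
qed

end
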